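(* Let $\mathfrak L_1,\dots,\mathfrak L_n,\mathfrak L$ be complete lattices and $(\mathcal F_\alpha)_{\alpha\in\mathcal O}$ with $\mathcal F_\alpha:\mathfrak L_1\times\dots\times\mathfrak L_n\to(\mathfrak L\to^+\mathfrak L)$ a family which is $\liminf$-pullable in all arguments. Then (1) for every $\beta\in\mathcal O$, the family $\vec{\mathcal G}\mapsto\mu^\beta(\mathcal F_\alpha(\vec{\mathcal G}))$ $(\alpha\in\mathcal O)$ is $\liminf$-pullable; (2) for every monotone $f:\mathfrak L\to\mathfrak L$, every $\phi:\mathcal O\to\mathcal O$ and every nonzero limit ordinal $\lambda\in\mathcal O$, writing $\mu^\alpha$ for $\mu^\alpha f$: $\mu^{\liminf_\lambda\phi}=\liminf_{\alpha\to\lambda}\mu^{\phi(\alpha)}$.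
   Context: $\mathcal O$ is the set of ordinals $\le\top_{\mathsf{ord}}$ for a fixed ordinal $\top_{\mathsf{ord}}$ ($=\beth_\omega$). For $g:\mathcal O\to\mathfrak L$ into a complete lattice and a nonzero limit $\lambda$: $\liminf_\lambda g=\liminf_{\alpha\to\lambda}g(\alpha)=\sup_{\alpha_0<\lambda}\inf_{\alpha_0\le\alpha<\lambda}g(\alpha)$, $\limsup_{\alpha\to\lambda}g(\alpha)=\inf_{\alpha_0<\lambda}\sup_{\alpha_0\le\alpha<\lambda}g(\alpha)$; on products, componentwise. $\mathfrak L\to^+\mathfrak L$ = monotone maps. For $f:\mathfrak L\to\mathfrak L$, $g\in\mathfrak L$: $f^0(g)=g$, $f^{\alpha+1}(g)=f(f^\alpha(g))$, $f^\lambda(g)=\limsup_{\alpha\to\lambda}f^\alpha(g)$; $\mu^\alpha f:=f^\alpha(\bot)$. A family $(\mathcal F_\alpha)_{\alpha\in\mathcal O}$ of maps $\mathfrak K\to\mathfrak K'$ is $\liminf$-pullable if for all $\mathcal G:\mathcal O\to\mathfrak K$ and nonzero limits $\lambda$: $\mathcal F_\gamma(\liminf_{\alpha\to\lambda}\mathcal G_\alpha)\sqsubseteq\liminf_{\alpha\to\lambda}\mathcal F_\gamma(\mathcal G_\alpha)$ for all $\gamma\in\mathcal O$, and $\mathcal F_\lambda(\liminf_{\alpha\to\lambda}\mathcal G_\alpha)\sqsubseteq\liminf_{\alpha\to\lambda}\mathcal F_\alpha(\mathcal G_\alpha)$. "$\liminf$-pullable in all arguments" means the family $(\vec{\mathcal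 G},\mathcal X)\mapsto\mathcal F_\alpha(\vec{\mathcal G})(\mathcal X)$ is $\liminf$-pullable. *)

theory Defs
  imports Main "HOL-Library.Product_Order"
begin

text \<open>The index set O of ordinals up to a top ordinal is modelled by a type
 'o of sort {wellorder, complete_lattice}: a well-order with a greatest element.\<close>

definition is_limit :: "'o::{wellorder,complete_lattice} \<Rightarrow> bool" where
  "is_limit l \<longleftrightarrow> l \<noteq> bot \<and> (\<forall>b<l. \<exists>c. b < c \<and> c < l)"

definition oliminf :: "'o::wellorder \<Rightarrow> ('o \<Rightarrow> 'a::complete_lattice) \<Rightarrow> 'a" where
  "oliminf l g = (SUP a0\<in>{..<l}. INF a\<in>{a0..<l}. g a)"

definition olimsup :: "'o::wellorder \<Rightarrow> ('o \<Rightarrow> 'a::complete_lattice) \<Rightarrow> 'a" where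
  "olimsup l g = (INF a0\<in>{..<l}. SUP a\<in>{a0..<l}. g a)"

definition titer :: "('a::complete_lattice \<Rightarrow> 'a) \<Rightarrow> 'a \<Rightarrow> 'o::{wellorder,complete_lattice} \<Rightarrow> 'a" where
  "titer f g = wfrec {(x, y). x < y}
     (\<lambda>h a. if a = bot then g
            else if is_limit a then olimsup a h
            else f (h (GREATEST b. b < a)))"

definition omu :: "'o::{wellorder,complete_lattice} \<Rightarrow> ('a::complete_lattice \<Rightarrow> 'a) \<Rightarrow> 'a" where
  "omu a f = titer f bot a"

definition liminf_pullable :: "('o::{wellorder,complete_lattice} \<Rightarrow> 'k::complete_lattice \<Rightarrow> 'k2::complete_lattice) \<Rightarrow> bool" where
  "liminf_pullable F \<longleftrightarrow>
     (\<forall>G :: 'o \<Rightarrow> 'k. \<forall>l. is_limit l \<longrightarrow>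
        (\<forall>c. F c (oliminf l G) \<le> oliminf l (\<lambda>a. F c (G a))) \<and>
        F l (oliminf l G) \<le> oliminf l (\<lambda>a. F a (G a)))"

end

theory Submission
  imports Defs
begin

lemma titer_eq:
  "titer f g (a::'o::{wellorder,complete_lattice}) = (if a = bot then g
            else if is_limit a then olimsup a (titer f g)
            else f (titer f g (GREATEST b. b < a)))"
proof -
  have w: "wf {(x::'o, y). x < y}" by (rule wf)
  have c: "olimsup a (cut (titer f g) {(x, y). x < y} a) = olimsup a (titer f g)"
    unfolding olimsup_def cut_def
    by (intro INF_cong SUP_cong refl) auto
  show ?thesis
  proof (cases "a = bot \<or> is_limit a")
    case True
    then show ?thesis
      unfolding titer_def using c
      by (subst wfrec[OF w]) (auto simp: titer_def)
  next
    case False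
    then obtain b where b: "b < a" "\<not> (\<exists>c. b < c \<and> c < a)"
      unfolding is_limit_def by auto
    have gb: "(GREATEST b. b < a) = b"
      by (rule Greatest_equality) (use b in \<open>auto simp: not_less[symmetric]\<close>)
    show ?thesis using False
      unfolding titer_def
      by (subst wfrec[OF w]) (auto simp: cut_def gb b)
  qed
qed

lemma cases3:
  fixes a :: "'o::{wellorder,complete_lattice}"
  obtains "a = bot" | "is_limit a" | p where "p < a" "\<And>c. p < c \<Longrightarrow> a \<le> c" "a \<noteq> bot" "\<not> is_limit a"
  using not_less unfolding is_limit_def by metis

lemma greatest_pred:
  fixes a p :: "'o::{wellorder,complete_lattice}"
  assumes "p < a" "\<And>c. p < c \<Longrightarrow> a \<le> c"
  shows "(GREATEST b. b < a) = p"
  by (rule Greatest_equality) (use assms in \<open>auto simp: not_less[symmetric]\<close>)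

lemma omu_bot: "omu bot f = bot"
  unfolding omu_def by (subst titer_eq) simp

lemma omu_succ:
  fixes a p :: "'o::{wellorder,complete_lattice}"
  assumes "p < a" "\<And>c. p < c \<Longrightarrow> a \<le> c" "a \<noteq> bot" "\<not> is_limit a"
  shows "omu a f = f (omu p f)"
  unfolding omu_def using assms by (subst titer_eq) (simp add: greatest_pred)

lemma omu_lim:
  fixes a :: "'o::{wellorder,complete_lattice}"
  assumes "is_limit a"
  shows "omu a f = olimsup a (\<lambda>x. omu x f)"
  unfolding omu_def using assms by (subst titer_eq) (simp add: is_limit_def)

lemma omu_mono_aux:
  fixes a :: "'o::{wellorder,complete_lattice}"
  assumes f: "mono f"
  shows "omu a f \<le> f (omu a f) \<and> (\<forall>b<a. omu b f \<le> omu a f) \<and>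
     (is_limit a \<longrightarrow> omu a f = (SUP x\<in>{..<a}. omu x f))"
proof (induction a rule: less_induct)
  case (less a)
  show ?case
  proof (cases a rule: cases3)
    case 1
    then show ?thesis by (simp add: omu_bot is_limit_def)
  next
    case 2
    have ne: "bot < a" using 2 unfolding is_limit_def by (simp add: bot_less)
    have s: "(SUP x\<in>{a0..<a}. omu x f) = (SUP x\<in>{..<a}. omu x f)" if "a0 < a" for a0
    proof (rule antisym)
      show "(SUP x\<in>{a0..<a}. omu x f) \<le> (SUP x\<in>{..<a}. omu x f)"
        by (rule SUP_subset_mono) auto
      show "(SUP x\<in>{..<a}. omu x f) \<le> (SUP x\<in>{a0..<a}. omu x f)"
      proof (rule SUP_least)
        fix x assume x: "x \<in> {..<a}"
        show "omu x f \<le> (SUP x\<in>{a0..<a}. omu x f)"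
        proof (cases "a0 \<le> x")
          case True then show ?thesis using x by (intro SUP_upper) auto
        next
          case False
          then have "omu x f \<le> omu a0 f" using less that by (simp add: not_le)
          also have "\<dots> \<le> (SUP x\<in>{a0..<a}. omu x f)" using that by (intro SUP_upper) auto
          finally show ?thesis .
        qed
      qed
    qed
    have eq: "omu a f = (SUP x\<in>{..<a}. omu x f)"
      unfolding omu_lim[OF 2] olimsup_def using ne s
      by (subst INF_cong[OF refl s]) (auto simp: INF_constant)
    have "omu a f \<le> f (omu a f)"
    proof -
      have "omu x f \<le> f (omu a f)" if "x < a" for x
      proof -
        have "omu x f \<le> omu a f" using that eq by (auto intro: SUP_upper)
        then show ?thesis using less that f by (meson monoD order_trans)
      qed
      then show ?thesis unfolding eq[symmetric] by (subst eq) (auto intro: SUP_least)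
    qed
    then show ?thesis using eq by (auto intro: SUP_upper)
  next
    case (3 p)
    have e: "omu a f = f (omu p f)" using omu_succ[OF 3] .
    have pa: "omu p f \<le> omu a f" using less 3 e by auto
    have "omu b f \<le> omu a f" if "b < a" for b
    proof -
      have "b \<le> p" using 3 that by (meson not_le)
      then have "omu b f \<le> omu p f" using less 3 by (cases "b = p") auto
      then show ?thesis using pa by simp
    qed
    moreover have "omu a f \<le> f (omu a f)" using pa e f by (simp add: monoD)
    ultimately show ?thesis using 3 by auto
  qed
qed

lemma omu_mono:
  fixes a b :: "'o::{wellorder,complete_lattice}"
  assumes "mono f" "b \<le> a" shows "omu b f \<le> omu a f"
  using omu_mono_aux[OF assms(1), of a] assms(2) by (cases "b = a") auto

lemma omu_limsup:
  fixes a :: "'o::{wellorder,complete_lattice}"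
  assumes "mono f" "is_limit a" shows "omu a f = (SUP x\<in>{..<a}. omu x f)"
  using omu_mono_aux[OF assms(1), of a] assms(2) by auto

lemma Inf_mem_wo:
  fixes S :: "'o::{wellorder,complete_lattice} set"
  assumes "S \<noteq> {}" shows "Inf S \<in> S"
proof -
  obtain y where y: "y \<in> S" using assms by auto
  define x where "x = (LEAST x. x \<in> S)"
  have x: "x \<in> S" unfolding x_def using y by (rule LeastI)
  have "\<forall>z\<in>S. x \<le> z" unfolding x_def by (auto intro: Least_le)
  then have "Inf S = x" using x by (intro antisym Inf_lower Inf_greatest) auto
  then show ?thesis using x by simp
qed

lemma oliminf_mono:
  assumes "\<And>a. X a \<le> Y a" shows "oliminf l X \<le> oliminf l Y"
  unfolding oliminf_def by (intro SUP_mono' INF_mono') (use assms in auto)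

lemma part2:
  fixes f :: "'l::complete_lattice \<Rightarrow> 'l" and phi :: "'o::{wellorder,complete_lattice} \<Rightarrow> 'o"
  assumes f: "mono f" and l: "is_limit l"
  shows "omu (oliminf l phi) f = oliminf l (\<lambda>a. omu (phi a) f)"
proof -
  define h where "h x = omu x f" for x :: 'o
  have hm: "h x \<le> h y" if "x \<le> y" for x y unfolding h_def using omu_mono[OF f that] .
  define m where "m a0 = (INF a\<in>{a0..<l}. phi a)" for a0
  have inf: "(INF a\<in>{a0..<l}. h (phi a)) = h (m a0)" if "a0 < l" for a0
  proof (rule antisym)
    have "m a0 \<in> phi ` {a0..<l}" unfolding m_def using that by (intro Inf_mem_wo) auto
    then obtain a where a: "a \<in> {a0..<l}" "m a0 = phi a" by auto
    show "(INF a\<in>{a0..<l}. h (phi a)) \<le> h (m a0)" using a by (metis INF_lower)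
    show "h (m a0) \<le> (INF a\<in>{a0..<l}. h (phi a))"
      by (rule INF_greatest, rule hm) (auto simp: m_def intro: INF_lower)
  qed
  have rhs: "oliminf l (\<lambda>a. h (phi a)) = (SUP a0\<in>{..<l}. h (m a0))"
    unfolding oliminf_def by (rule SUP_cong) (auto simp: inf)
  define L where "L = (SUP a0\<in>{..<l}. m a0)"
  have lhs: "oliminf l phi = L" unfolding oliminf_def L_def m_def ..
  have ne: "bot < l" using l unfolding is_limit_def by (simp add: bot_less)
  have "h L = (SUP a0\<in>{..<l}. h (m a0))"
  proof (rule antisym)
    show "(SUP a0\<in>{..<l}. h (m a0)) \<le> h L"
      by (rule SUP_least, rule hm) (auto simp: L_def intro: SUP_upper)
    show "h L \<le> (SUP a0\<in>{..<l}. h (m a0))"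
    proof (cases "L \<in> m ` {..<l}")
      case True
      then obtain a0 where "a0 < l" "L = m a0" by auto
      then show ?thesis by (auto intro: SUP_upper)
    next
      case False
      have Lnb: "L \<noteq> bot"
      proof
        assume "L = bot"
        have "m bot \<le> L" unfolding L_def using ne by (intro SUP_upper) auto
        then have "m bot = bot" using \<open>L = bot\<close> by (simp add: bot_unique)
        then show False using False ne \<open>L = bot\<close> by (metis image_eqI lessThan_iff)
      qed
      have cof: "\<exists>a0<l. b < m a0" if "b < L" for b
      proof (rule ccontr)
        assume "\<not> ?thesis"
        then have "L \<le> b" unfolding L_def by (auto intro!: SUP_least simp: not_less dest: leD)
        then show False using that by simp
      qed
      have Llim: "is_limit L" unfolding is_limit_def
      proof (intro conjI allI impI Lnb)
        fix b assume "b < L"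
        then obtain a0 where a0: "a0 < l" "b < m a0" using cof by auto
        have "m a0 \<le> L" unfolding L_def using a0 by (auto intro: SUP_upper)
        moreover have "m a0 \<noteq> L" using False a0 by auto
        ultimately show "\<exists>c. b < c \<and> c < L" using a0 by auto
      qed
      have "h L = (SUP x\<in>{..<L}. h x)" unfolding h_def by (rule omu_limsup[OF f Llim])
      also have "\<dots> \<le> (SUP a0\<in>{..<l}. h (m a0))"
      proof (rule SUP_least)
        fix x assume "x \<in> {..<L}"
        then obtain a0 where a0: "a0 < l" "x < m a0" using cof by auto
        then have "h x \<le> h (m a0)" by (intro hm) simp
        also have "\<dots> \<le> (SUP a0\<in>{..<l}. h (m a0))" using a0 by (auto intro: SUP_upper)
        finally show "h x \<le> (SUP a0\<in>{..<l}. h (m a0))" .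
      qed
      finally show ?thesis .
    qed
  qed
  then show ?thesis using rhs lhs unfolding h_def by simp
qed

lemma oliminf_pair:
  "oliminf l (\<lambda>a. (G a, Y a)) = (oliminf l G, oliminf l Y)"
  unfolding oliminf_def by (simp add: prod_eq_iff fst_SUP snd_SUP fst_INF snd_INF)

lemma part1:
  fixes F :: "'o::{wellorder,complete_lattice} \<Rightarrow> 'k::complete_lattice \<Rightarrow> 'l::complete_lattice \<Rightarrow> 'l"
  assumes mono_F: "\<And>a G. mono (F a G)"
    and pull: "liminf_pullable (\<lambda>a (G, X). F a G X)"
    and l: "is_limit l"
  shows "(\<forall>c. omu b (F c (oliminf l G)) \<le> oliminf l (\<lambda>a. omu b (F c (G a)))) \<and>
         omu b (F l (oliminf l G)) \<le> oliminf l (\<lambda>a. omu b (F a (G a)))"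
proof (induction b rule: less_induct)
  case (less b)
  have P1: "F c (oliminf l G) (oliminf l Y) \<le> oliminf l (\<lambda>a. F c (G a) (Y a))" for c Y
    using pull[unfolded liminf_pullable_def, rule_format, of l "\<lambda>a. (G a, Y a)", OF l]
    by (simp add: oliminf_pair)
  have P2: "F l (oliminf l G) (oliminf l Y) \<le> oliminf l (\<lambda>a. F a (G a) (Y a))" for Y
    using pull[unfolded liminf_pullable_def, rule_format, of l "\<lambda>a. (G a, Y a)", OF l]
    by (simp add: oliminf_pair)
  show ?case
  proof (cases b rule: cases3)
    case 1
    then show ?thesis by (simp add: omu_bot)
  next
    case 2
    have A: "omu b (F c (oliminf l G)) \<le> oliminf l (\<lambda>a. omu b (F c (G a)))" for c
    proof -
      have "omu b (F c (oliminf l G)) = (SUP x\<in>{..<b}. omu x (F c (oliminf l G)))"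
        by (rule omu_limsup[OF mono_F 2])
      also have "\<dots> \<le> oliminf l (\<lambda>a. omu b (F c (G a)))"
      proof (rule SUP_least)
        fix x assume x: "x \<in> {..<b}"
        then have "omu x (F c (oliminf l G)) \<le> oliminf l (\<lambda>a. omu x (F c (G a)))"
          using less by auto
        also have "\<dots> \<le> oliminf l (\<lambda>a. omu b (F c (G a)))"
          using x by (intro oliminf_mono omu_mono[OF mono_F]) auto
        finally show "omu x (F c (oliminf l G)) \<le> oliminf l (\<lambda>a. omu b (F c (G a)))" .
      qed
      finally show ?thesis .
    qed
    have B: "omu b (F l (oliminf l G)) \<le> oliminf l (\<lambda>a. omu b (F a (G a)))"
    proof -
      have "omu b (F l (oliminf l G)) = (SUP x\<in>{..<b}. omu x (F l (oliminf l G)))"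
        by (rule omu_limsup[OF mono_F 2])
      also have "\<dots> \<le> oliminf l (\<lambda>a. omu b (F a (G a)))"
      proof (rule SUP_least)
        fix x assume x: "x \<in> {..<b}"
        then have "omu x (F l (oliminf l G)) \<le> oliminf l (\<lambda>a. omu x (F a (G a)))"
          using less by auto
        also have "\<dots> \<le> oliminf l (\<lambda>a. omu b (F a (G a)))"
          using x by (intro oliminf_mono omu_mono[OF mono_F]) auto
        finally show "omu x (F l (oliminf l G)) \<le> oliminf l (\<lambda>a. omu b (F a (G a)))" .
      qed
      finally show ?thesis .
    qed
    show ?thesis using A B by auto
  next
    case (3 p)
    have IH: "\<forall>c. omu p (F c (oliminf l G)) \<le> oliminf l (\<lambda>a. omu p (F c (G a)))"
      "omu p (F l (oliminf l G)) \<le> oliminf l (\<lambda>a. omu p (F a (G a)))"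
      using less 3 by auto
    have A: "omu b (F c (oliminf l G)) \<le> oliminf l (\<lambda>a. omu b (F c (G a)))" for c
    proof -
      have "omu b (F c (oliminf l G)) = F c (oliminf l G) (omu p (F c (oliminf l G)))"
        by (rule omu_succ[OF 3])
      also have "\<dots> \<le> F c (oliminf l G) (oliminf l (\<lambda>a. omu p (F c (G a))))"
        using IH mono_F by (meson monoD)
      also have "\<dots> \<le> oliminf l (\<lambda>a. F c (G a) (omu p (F c (G a))))" by (rule P1)
      also have "\<dots> = oliminf l (\<lambda>a. omu b (F c (G a)))" by (simp add: omu_succ[OF 3])
      finally show ?thesis .
    qed
    have B: "omu b (F l (oliminf l G)) \<le> oliminf l (\<lambda>a. omu b (F a (G a)))"
    proof -
      have "omu b (F l (oliminf l G)) = F l (oliminf l G) (omu p (F l (oliminf l G)))"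
        by (rule omu_succ[OF 3])
      also have "\<dots> \<le> F l (oliminf l G) (oliminf l (\<lambda>a. omu p (F a (G a))))"
        using IH mono_F by (meson monoD)
      also have "\<dots> \<le> oliminf l (\<lambda>a. F a (G a) (omu p (F a (G a))))" by (rule P2)
      also have "\<dots> = oliminf l (\<lambda>a. omu b (F a (G a)))" by (simp add: omu_succ[OF 3])
      finally show ?thesis .
    qed
    show ?thesis using A B by auto
  qed
qed

theorem lemma4p17:
  fixes F :: "'o::{wellorder,complete_lattice} \<Rightarrow> 'k::complete_lattice \<Rightarrow> 'l::complete_lattice \<Rightarrow> 'l"
  assumes mono_F: "\<And>a G. mono (F a G)"
    and pull: "liminf_pullable (\<lambda>a (G, X). F a G X)"
  shows "(\<forall>b::'o. liminf_pullable (\<lambda>a G. omu b (F a G)))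
    \<and> (\<forall>(f :: 'l \<Rightarrow> 'l) (phi :: 'o \<Rightarrow> 'o) l. mono f \<longrightarrow> is_limit l \<longrightarrow>
          omu (oliminf l phi) f = oliminf l (\<lambda>a. omu (phi a) f))"
proof (intro conjI allI impI)
  fix b :: 'o
  show "liminf_pullable (\<lambda>a G. omu b (F a G))"
    unfolding liminf_pullable_def using part1[OF mono_F pull] by blast
next
  fix f :: "'l \<Rightarrow> 'l" and phi :: "'o \<Rightarrow> 'o" and l :: 'o
  assume "mono f" "is_limit l"
  then show "omu (oliminf l phi) f = oliminf l (\<lambda>a. omu (phi a) f)" by (rule part2)
qed

end
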